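(* The family $\mathcal A$ of achievement sets contained in $[0,1]$ is closed in $K_0([0,1])$ and in $K([0,1])$, with respect to the Pompeiu–Hausdorff metric.
   Context: For an absolutely convergent real series $\sum_n a_n$, its achievement set is $E(a_n):=\{\sum_{n\in A}a_n:\ A\subset\mathbb N\}$ (a compact set containing $0$). $\mathcal A$ denotes the family of all sets $E(a_n)$, for absolutely convergent real series $\sum a_n$, that are contained in $[0,1]$. $K([0,1])$ is the family of non-empty compact subsets of $[0,1]$ and $K_0([0,1])$ the family of compact subsets of $[0,1]$ containing $0$, both with the Pompeiu–Hausdorff metric $d_H(A,B)=\max\{\sup_{a\in A}\operatorname{dist}(a,B),\sup_{b\in B}\operatorname{dist}(b,A)\}$. *)

theory Defs
  imports "HOL-Analysis.Analysis"
begin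

definition achievement_set :: "(nat \<Rightarrow> real) \<Rightarrow> real set" where
  "achievement_set a = {(\<Sum>n. if n \<in> A then a n else 0) | A. A \<subseteq> (UNIV :: nat set)}"

definition achievement_family :: "real set set" where
  "achievement_family =
     {achievement_set a | a. summable (\<lambda>n. \<bar>a n\<bar>) \<and> achievement_set a \<subseteq> {0..1}}"

definition K01 :: "real set set" where
  "K01 = {K. K \<noteq> {} \<and> compact K \<and> K \<subseteq> {0..1}}"

definition K0_01 :: "real set set" where
  "K0_01 = {K. compact K \<and> K \<subseteq> {0..1} \<and> 0 \<in> K}"

definition hausdorff_dist :: "real set \<Rightarrow> real set \<Rightarrow> real" where
  "hausdorff_dist A B = max (SUP a\<in>A. infdist a B) (SUP b\<in>B. infdist b A)"

definition hclosed_in :: "real set set \<Rightarrow> real set set \<Rightarrow> bool" where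
  "hclosed_in F X \<longleftrightarrow> F \<subseteq> X \<and>
     (\<forall>K\<in>X. (\<forall>e>0. \<exists>E\<in>F. hausdorff_dist K E < e) \<longrightarrow> K \<in> F)"

end

theory Submission imports Defs "HOL-Library.Diagonal_Subsequence" begin

definition AS :: "(nat \<Rightarrow> real) \<Rightarrow> real set" where
  "AS a = {infsum a A | A. True}"

definition good :: "(nat \<Rightarrow> real) \<Rightarrow> bool" where
  "good a \<longleftrightarrow> (\<forall>n. 0 \<le> a n) \<and> summable a"

lemma good_summable_on: "good a \<Longrightarrow> a summable_on A"
proof -
  assume "good a"
  hence "a summable_on UNIV" unfolding good_def using summable_nonneg_imp_summable_on by blast
  thus ?thesis using summable_on_subset_banach by blast
qed

lemma good_nonneg: "good a \<Longrightarrow> 0 \<le> a n"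
  unfolding good_def by auto

lemma infsum_nonneg_good: "good a \<Longrightarrow> 0 \<le> infsum a A"
  by (simp add: good_nonneg infsum_nonneg)

lemma infsum_mono_good: "good a \<Longrightarrow> A \<subseteq> B \<Longrightarrow> infsum a A \<le> infsum a B"
  by (simp add: good_nonneg good_summable_on infsum_mono2)

lemma achievement_set_AS:
  assumes "summable (\<lambda>n. \<bar>a n\<bar>)"
  shows "achievement_set a = AS a"
proof -
  have eq: "(\<Sum>n. if n \<in> A then a n else 0) = infsum a A" for A
  proof -
    let ?g = "\<lambda>n. if n \<in> A then a n else 0"
    have sg: "summable (\<lambda>n. norm (?g n))"
      by (rule summable_comparison_test'[OF assms, where N=0]) simp
    hence "summable ?g" by (rule summable_norm_cancel)
    hence "?g sums (suminf ?g)" by (simp add: summable_sums)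
    hence "(?g has_sum suminf ?g) UNIV" using norm_summable_imp_has_sum[OF sg] by blast
    hence "infsum ?g UNIV = suminf ?g" by (simp add: infsumI)
    moreover have "infsum ?g UNIV = infsum a A"
      by (rule infsum_cong_neutral) auto
    ultimately show ?thesis by simp
  qed
  show ?thesis unfolding achievement_set_def AS_def using eq by auto
qed

lemma AS_split:
  assumes "good a"
  shows "infsum a A = sum a (A \<inter> {..<n}) + infsum a (A \<inter> {n..})"
proof -
  have "A = (A \<inter> {..<n}) \<union> (A \<inter> {n..})" by auto
  hence "infsum a A = infsum a ((A \<inter> {..<n}) \<union> (A \<inter> {n..}))" by simp
  also have "\<dots> = infsum a (A \<inter> {..<n}) + infsum a (A \<inter> {n..})"
    by (rule infsum_Un_disjoint) (auto simp: good_summable_on[OF assms])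
  finally show ?thesis by simp
qed

lemma tail_bound:
  assumes "good a"
  shows "0 \<le> infsum a (A \<inter> {n..}) \<and> infsum a (A \<inter> {n..}) \<le> infsum a {n..}"
  using assms infsum_mono_good infsum_nonneg_good by auto

lemma tail_eq:
  assumes "good a"
  shows "infsum a {n..} = infsum a UNIV - sum a {..<n}"
  using AS_split[OF assms, of UNIV n] by simp

lemma good_infsum_suminf:
  assumes "good a"
  shows "infsum a UNIV = suminf a"
proof -
  have "summable a" "\<And>n. 0 \<le> a n" using assms unfolding good_def by auto
  hence "(a has_sum suminf a) UNIV" using sums_nonneg_imp_has_sum summable_sums by blast
  thus ?thesis by (rule infsumI)
qed

lemma good_has_sum_UNIV:
  assumes "good a"
  shows "a sums infsum a UNIV"
  using assms good_infsum_suminf[OF assms] unfolding good_def by (simp add: summable_sums)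

lemma tail_tendsto:
  assumes "good a"
  shows "(\<lambda>n. infsum a {n..}) \<longlonglongrightarrow> 0"
proof -
  have "(\<lambda>n. sum a {..<n}) \<longlonglongrightarrow> infsum a UNIV"
    using good_has_sum_UNIV[OF assms] by (simp add: sums_def)
  hence "(\<lambda>n. infsum a UNIV - sum a {..<n}) \<longlonglongrightarrow> infsum a UNIV - infsum a UNIV"
    by (intro tendsto_intros)
  thus ?thesis by (simp add: tail_eq[OF assms])
qed

lemma partial_tendsto_tail:
  assumes "good a"
  shows "(\<lambda>N. sum a {n..<N}) \<longlonglongrightarrow> infsum a {n..}"
proof -
  have "(\<lambda>N. sum a {..<N}) \<longlonglongrightarrow> infsum a UNIV"
    using good_has_sum_UNIV[OF assms] by (simp add: sums_def)
  hence "(\<lambda>N. sum a {..<N} - sum a {..<n}) \<longlonglongrightarrow> infsum a UNIV - sum a {..<n}"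
    by (intro tendsto_intros)
  moreover have "eventually (\<lambda>N. sum a {..<N} - sum a {..<n} = sum a {n..<N}) sequentially"
    using eventually_ge_at_top[of n]
  proof (rule eventually_mono)
    fix N assume "n \<le> N"
    hence "{..<N} = {..<n} \<union> {n..<N}" by auto
    moreover have "sum a ({..<n} \<union> {n..<N}) = sum a {..<n} + sum a {n..<N}"
      by (rule sum.union_disjoint) auto
    ultimately have "sum a {..<N} = sum a {..<n} + sum a {n..<N}" by simp
    thus "sum a {..<N} - sum a {..<n} = sum a {n..<N}" by simp
  qed
  ultimately have "(\<lambda>N. sum a {n..<N}) \<longlonglongrightarrow> infsum a UNIV - sum a {..<n}"
    by (rule Lim_transform_eventually)
  thus ?thesis by (simp add: tail_eq[OF assms])
qed

lemma finite_in_AS: "finite B \<Longrightarrow> sum a B \<in> AS a"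
  unfolding AS_def by (metis (mono_tags, lifting) infsum_finite mem_Collect_eq)

lemma zero_in_AS: "0 \<in> AS a"
  using finite_in_AS[of "{}" a] by simp

lemma diag_subseq:
  fixes f :: "nat \<Rightarrow> nat \<Rightarrow> real"
  assumes bdd: "\<And>k m. \<bar>f k m\<bar> \<le> M"
  shows "\<exists>r g. strict_mono r \<and> (\<forall>m. (\<lambda>k. f (r k) m) \<longlonglongrightarrow> g m)"
proof -
  let ?P = "\<lambda>n. \<lambda>s. convergent (\<lambda>k. f (s k) n)"
  interpret nat: subseqs ?P
  proof (unfold convergent_def, unfold subseqs_def, auto)
    fix n :: nat and s :: "nat \<Rightarrow> nat" assume s: "strict_mono s"
    have "\<And>k. f (s k) n \<in> {-M..M}"
      using bdd by (simp add: abs_le_iff minus_le_iff)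
    hence "\<exists>l s'. strict_mono s' \<and> ((\<lambda>k. f (s k) n) \<circ> s') \<longlonglongrightarrow> l"
      using compact_Icc compact_imp_seq_compact seq_compactE by metis
    thus "\<exists>s'. strict_mono (s'::nat\<Rightarrow>nat) \<and> (\<exists>l. (\<lambda>k. f (s (s' k)) n) \<longlonglongrightarrow> l)"
      by (auto simp: comp_def)
  qed
  define d where "d = nat.diagseq"
  have subseq: "strict_mono d"
    unfolding d_def using nat.subseq_diagseq by auto
  have cnv: "?P n d" for n
  proof -
    have Pn_seqseq: "?P n (nat.seqseq (Suc n))"
      by (rule nat.seqseq_holds)
    have 1: "(\<lambda>k. f ((nat.seqseq (Suc n) \<circ> (\<lambda>k. nat.fold_reduce (Suc n) k
      (Suc n + k))) k) n) = (\<lambda>k. f (nat.seqseq (Suc n) k) n) \<circ>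
      (\<lambda>k. nat.fold_reduce (Suc n) k (Suc n + k))"
      by auto
    have 2: "?P n (d \<circ> ((+) (Suc n)))"
      unfolding d_def nat.diagseq_seqseq 1
      by (intro convergent_subseq_convergent Pn_seqseq nat.subseq_diagonal_rest)
    then obtain L where 3: "(\<lambda>na. f (d (na + Suc n)) n) \<longlonglongrightarrow> L"
      by (auto simp: add.commute dest: convergentD)
    then have "(\<lambda>k. f (d k) n) \<longlonglongrightarrow> L"
      by (rule LIMSEQ_offset)
    then show ?thesis
      by (auto simp: convergent_def)
  qed
  show ?thesis
    apply (rule exI[of _ d], rule exI[of _ "\<lambda>m. lim (\<lambda>k. f (d k) m)"])
    using subseq cnv convergent_LIMSEQ_iff by blast
qed

lemma argmax_exists:
  assumes "good a" "finite S"
  shows "\<exists>m. m \<notin> S \<and> (\<forall>j. j \<notin> S \<longrightarrow> a j \<le> a m)"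
proof (cases "\<forall>j. j \<notin> S \<longrightarrow> a j \<le> 0")
  case True
  obtain m where "m \<notin> S" using assms(2) ex_new_if_finite infinite_UNIV_nat by blast
  thus ?thesis using True good_nonneg[OF assms(1), of m] by force
next
  case False
  then obtain m0 where m0: "m0 \<notin> S" "a m0 > 0" by force
  have "a \<longlonglongrightarrow> 0" using assms(1) unfolding good_def by (simp add: summable_LIMSEQ_zero)
  then obtain N where N: "\<And>j. j \<ge> N \<Longrightarrow> a j < a m0"
    using m0(2) by (metis (no_types, lifting) LIMSEQ_le_const2 eventually_sequentially order_tendstoD(2))
  define F where "F = {j. j \<notin> S \<and> a m0 \<le> a j}"
  have "F \<subseteq> {..<N}" using N unfolding F_def by (auto simp: not_less[symmetric])
  hence finF: "finite F" using finite_subset by blast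
  have "m0 \<in> F" using m0 unfolding F_def by auto
  hence ne: "a ` F \<noteq> {}" by auto
  have "Max (a ` F) \<in> a ` F" using Max_in[OF _ ne] finF by blast
  then obtain m where m: "m \<in> F" "a m = Max (a ` F)" by auto
  have "\<forall>j. j \<notin> S \<longrightarrow> a j \<le> a m"
  proof (intro allI impI)
    fix j assume j: "j \<notin> S"
    show "a j \<le> a m"
    proof (cases "j \<in> F")
      case True thus ?thesis using m finF by auto
    next
      case False
      hence "a j < a m0" using j unfolding F_def by auto
      moreover have "a m0 \<le> a m" using m(1) unfolding F_def by auto
      ultimately show ?thesis by simp
    qed
  qed
  thus ?thesis using m(1) unfolding F_def by auto
qed

definition step :: "(nat \<Rightarrow> real) \<Rightarrow> nat set \<Rightarrow> nat" where
  "step a S = (SOME m. m \<notin> S \<and> (\<forall>j. j \<notin> S \<longrightarrow> a j \<le> a m))"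

primrec Ss :: "(nat \<Rightarrow> real) \<Rightarrow> nat \<Rightarrow> nat set" where
  "Ss a 0 = {}"
| "Ss a (Suc n) = insert (step a (Ss a n)) (Ss a n)"

lemma Ss_finite: "finite (Ss a n)"
  by (induct n) auto

lemma Ss_image: "Ss a n = (\<lambda>i. step a (Ss a i)) ` {..<n}"
  by (induct n) (auto simp: lessThan_Suc)

lemma step_prop:
  assumes "good a"
  shows "step a (Ss a n) \<notin> Ss a n \<and> (\<forall>j. j \<notin> Ss a n \<longrightarrow> a j \<le> a (step a (Ss a n)))"
  unfolding step_def using someI_ex[OF argmax_exists[OF assms Ss_finite]] .

lemma sort_lemma:
  assumes "good a"
  shows "\<exists>b. good b \<and> AS b = AS a \<and> (\<forall>n. b (Suc n) \<le> b n)"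
proof -
  define \<sigma> where "\<sigma> = (\<lambda>i. step a (Ss a i))"
  have SS: "Ss a n = \<sigma> ` {..<n}" for n unfolding \<sigma>_def by (rule Ss_image)
  have P: "\<sigma> n \<notin> Ss a n" "\<And>j. j \<notin> Ss a n \<Longrightarrow> a j \<le> a (\<sigma> n)" for n
    using step_prop[OF assms, of n] unfolding \<sigma>_def by auto
  have inj: "inj \<sigma>"
  proof (rule injI)
    fix x y assume eq: "\<sigma> x = \<sigma> y"
    show "x = y"
    proof (rule ccontr)
      assume "x \<noteq> y"
      then consider "x < y" | "y < x" by linarith
      thus False
      proof cases
        case 1
        hence "\<sigma> x \<in> Ss a y" using SS by auto
        thus False using P(1)[of y] eq by simp
      next
        case 2
        hence "\<sigma> y \<in> Ss a x" using SS by auto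
        thus False using P(1)[of x] eq by simp
      qed
    qed
  qed
  define b where "b = a \<circ> \<sigma>"
  have bnn: "\<And>n. 0 \<le> b n" using good_nonneg[OF assms] unfolding b_def by simp
  have "a summable_on range \<sigma>" using good_summable_on[OF assms] .
  hence "b summable_on UNIV" unfolding b_def
    using summable_on_reindex[of \<sigma> UNIV a] inj by simp
  hence "summable b" using summable_on_UNIV_nonneg_real_iff bnn by blast
  hence gb: "good b" using bnn unfolding good_def by simp
  have mono: "b (Suc n) \<le> b n" for n
  proof -
    have "\<sigma> (Suc n) \<notin> Ss a (Suc n)" by (rule P(1))
    hence "\<sigma> (Suc n) \<notin> Ss a n" by simp
    thus ?thesis using P(2)[of "\<sigma> (Suc n)" n] unfolding b_def by simp
  qed
  have cover: "m \<in> range \<sigma>" if "a m \<noteq> 0" for m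
  proof (rule ccontr)
    assume nm: "m \<notin> range \<sigma>"
    have am: "a m > 0" using that good_nonneg[OF assms, of m] by simp
    have "\<And>n. a m \<le> b n"
    proof -
      fix n
      have "m \<notin> Ss a n" using nm SS by auto
      thus "a m \<le> b n" using P(2) unfolding b_def by simp
    qed
    moreover have "b \<longlonglongrightarrow> 0" using \<open>summable b\<close> by (simp add: summable_LIMSEQ_zero)
    ultimately have "a m \<le> 0" by (simp add: LIMSEQ_le_const)
    thus False using am by simp
  qed
  have "AS b = AS a"
  proof
    show "AS b \<subseteq> AS a"
    proof
      fix x assume "x \<in> AS b"
      then obtain B where "x = infsum b B" unfolding AS_def by auto
      also have "\<dots> = infsum a (\<sigma> ` B)" unfolding b_def
        by (rule infsum_reindex[symmetric]) (meson inj inj_on_subset subset_UNIV)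
      finally show "x \<in> AS a" unfolding AS_def by auto
    qed
  next
    show "AS a \<subseteq> AS b"
    proof
      fix x assume "x \<in> AS a"
      then obtain A where x: "x = infsum a A" unfolding AS_def by auto
      have "infsum a A = infsum a (\<sigma> ` (\<sigma> -` A))"
        by (rule infsum_cong_neutral) (use cover in auto)
      also have "\<dots> = infsum b (\<sigma> -` A)" unfolding b_def
        by (rule infsum_reindex) (meson inj inj_on_subset subset_UNIV)
      finally show "x \<in> AS b" using x unfolding AS_def by auto
    qed
  qed
  thus ?thesis using gb mono by blast
qed

lemma AS_bounded:
  assumes "good a"
  shows "AS a \<subseteq> {0..infsum a UNIV}"
  unfolding AS_def using infsum_nonneg_good[OF assms] infsum_mono_good[OF assms] by auto

lemma approx_from_sets:
  assumes ga: "good a"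
    and ev: "\<And>m. eventually (\<lambda>k. m \<in> A k \<longleftrightarrow> m \<in> L) sequentially"
  shows "(\<lambda>k. infsum a (A k)) \<longlonglongrightarrow> infsum a L"
  unfolding tendsto_iff
proof (intro allI impI)
  fix e :: real assume e: "e > 0"
  have "eventually (\<lambda>n. infsum a {n..} < e) sequentially"
    using tail_tendsto[OF ga] e by (rule order_tendstoD(2))
  then obtain n where n: "infsum a {n..} < e" by (auto simp: eventually_sequentially)
  have "eventually (\<lambda>k. \<forall>m\<in>{..<n}. m \<in> A k \<longleftrightarrow> m \<in> L) sequentially"
    by (rule eventually_ball_finite) (use ev in auto)
  thus "eventually (\<lambda>k. dist (infsum a (A k)) (infsum a L) < e) sequentially"
  proof (rule eventually_mono)
    fix k assume H: "\<forall>m\<in>{..<n}. m \<in> A k \<longleftrightarrow> m \<in> L"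
    hence eq: "A k \<inter> {..<n} = L \<inter> {..<n}" by auto
    have 1: "infsum a (A k) = sum a (L \<inter> {..<n}) + infsum a (A k \<inter> {n..})"
      using AS_split[OF ga, of "A k" n] eq by simp
    have 2: "infsum a L = sum a (L \<inter> {..<n}) + infsum a (L \<inter> {n..})"
      using AS_split[OF ga, of L n] by simp
    show "dist (infsum a (A k)) (infsum a L) < e"
      unfolding dist_real_def 1 2
      using tail_bound[OF ga, of "A k" n] tail_bound[OF ga, of L n] n by auto
  qed
qed

lemma AS_closed:
  assumes "good a"
  shows "closed (AS a)"
  unfolding closed_sequential_limits
proof (intro allI impI, elim conjE)
  fix x l assume xs: "\<forall>n. x n \<in> AS a" and lim: "x \<longlonglongrightarrow> l"
  define A where "A = (\<lambda>n. SOME B. x n = infsum a B)"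
  have A: "x n = infsum a (A n)" for n
  proof -
    have "\<exists>B. x n = infsum a B" using xs unfolding AS_def by auto
    thus ?thesis unfolding A_def by (rule someI_ex)
  qed
  define ind where "ind = (\<lambda>k m. if m \<in> A k then 1 else (0::real))"
  have "\<exists>r g. strict_mono r \<and> (\<forall>m. (\<lambda>k. ind (r k) m) \<longlonglongrightarrow> g m)"
    by (rule diag_subseq[of ind 1]) (simp add: ind_def)
  then obtain r g where r: "strict_mono r" and g: "\<And>m. (\<lambda>k. ind (r k) m) \<longlonglongrightarrow> g m"
    by blast
  define L where "L = {m. g m > 1/2}"
  have ev: "eventually (\<lambda>k. m \<in> A (r k) \<longleftrightarrow> m \<in> L) sequentially" for m
  proof -
    have "eventually (\<lambda>k. dist (ind (r k) m) (g m) < 1/2) sequentially"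
      using g[of m] unfolding tendsto_iff by (metis half_gt_zero zero_less_one)
    thus ?thesis
    proof (rule eventually_mono)
      fix k assume "dist (ind (r k) m) (g m) < 1/2"
      thus "m \<in> A (r k) \<longleftrightarrow> m \<in> L" unfolding L_def ind_def dist_real_def
        by (auto split: if_splits simp: abs_if)
    qed
  qed
  have "(\<lambda>k. infsum a (A (r k))) \<longlonglongrightarrow> infsum a L"
    by (rule approx_from_sets[OF assms ev])
  moreover have "(\<lambda>k. infsum a (A (r k))) \<longlonglongrightarrow> l"
    using LIMSEQ_subseq_LIMSEQ[OF lim r] A by (simp add: comp_def)
  ultimately have "l = infsum a L" using LIMSEQ_unique by blast
  thus "l \<in> AS a" unfolding AS_def by auto
qed

lemma AS_compact:
  assumes "good a"
  shows "compact (AS a)"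
  using AS_closed[OF assms] AS_bounded[OF assms] bounded_subset[OF bounded_closed_interval]
  by (meson compact_eq_bounded_closed)

lemma floor_double: fixes y :: real shows "real_of_int \<lfloor>2 * y\<rfloor> = 2 * real_of_int \<lfloor>y\<rfloor> + (if odd \<lfloor>2 * y\<rfloor> then 1 else 0)"
proof -
  have a: "real_of_int \<lfloor>y\<rfloor> \<le> y" "y < real_of_int \<lfloor>y\<rfloor> + 1" by linarith+
  have "2 * \<lfloor>y\<rfloor> \<le> \<lfloor>2 * y\<rfloor>" using a by linarith
  moreover have "\<lfloor>2 * y\<rfloor> \<le> 2 * \<lfloor>y\<rfloor> + 1" using a by linarith
  ultimately have "\<lfloor>2 * y\<rfloor> = 2 * \<lfloor>y\<rfloor> \<or> \<lfloor>2 * y\<rfloor> = 2 * \<lfloor>y\<rfloor> + 1" by linarith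
  thus ?thesis by auto
qed

lemma binary_partial:
  fixes t :: real
  assumes "0 \<le> t" "t < 1"
  shows "(\<Sum>n<N. if odd \<lfloor>2 ^ Suc n * t\<rfloor> then (1/2::real) ^ Suc n else 0) = real_of_int \<lfloor>2 ^ N * t\<rfloor> / 2 ^ N"
proof (induct N)
  case 0
  have "\<lfloor>t\<rfloor> = 0" using assms by (simp add: floor_eq_iff)
  thus ?case by simp
next
  case (Suc N)
  have fd: "real_of_int \<lfloor>2 ^ Suc N * t\<rfloor> = 2 * real_of_int \<lfloor>2 ^ N * t\<rfloor> + (if odd \<lfloor>2 ^ Suc N * t\<rfloor> then 1 else 0)"
    using floor_double[of "2 ^ N * t"] by (simp add: mult.assoc)
  show ?case
    unfolding sum.lessThan_Suc Suc fd
    by (simp add: field_simps power_one_over)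
qed

lemma binary_expansion:
  fixes t :: real
  assumes "0 \<le> t" "t < 1"
  shows "\<exists>A. infsum (\<lambda>n. (1/2::real) ^ Suc n) A = t"
proof -
  define A where "A = {n. odd \<lfloor>2 ^ Suc n * t\<rfloor>}"
  let ?g = "\<lambda>n. if n \<in> A then (1/2::real) ^ Suc n else 0"
  have ps: "(\<Sum>n<N. ?g n) = real_of_int \<lfloor>2 ^ N * t\<rfloor> / 2 ^ N" for N
    using binary_partial[OF assms, of N] unfolding A_def by simp
  have lo: "t - (1/2) ^ N \<le> real_of_int \<lfloor>2 ^ N * t\<rfloor> / 2 ^ N" for N
  proof -
    have "2 ^ N * t - 1 \<le> real_of_int \<lfloor>2 ^ N * t\<rfloor>" by linarith
    hence "(2 ^ N * t - 1) / 2 ^ N \<le> real_of_int \<lfloor>2 ^ N * t\<rfloor> / 2 ^ N"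
      by (rule divide_right_mono) simp_all
    moreover have "(2 ^ N * t - 1) / 2 ^ N = 2 ^ N * t / 2 ^ N - 1 / 2 ^ N"
      by (rule diff_divide_distrib)
    moreover have "2 ^ N * t / (2 ^ N) = t" by simp
    moreover have "1 / (2::real) ^ N = (1/2) ^ N" by (simp add: power_one_over)
    ultimately show ?thesis by linarith
  qed
  have hi: "real_of_int \<lfloor>2 ^ N * t\<rfloor> / 2 ^ N \<le> t" for N
  proof -
    have "real_of_int \<lfloor>2 ^ N * t\<rfloor> \<le> 2 ^ N * t" by linarith
    hence "real_of_int \<lfloor>2 ^ N * t\<rfloor> / 2 ^ N \<le> 2 ^ N * t / 2 ^ N"
      by (rule divide_right_mono) simp_all
    also have "2 ^ N * t / 2 ^ N = t" by simp
    finally show ?thesis .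
  qed
  have L: "(\<lambda>N. t - (1/2::real) ^ N) \<longlonglongrightarrow> t"
  proof -
    have "(\<lambda>N. (1/2::real) ^ N) \<longlonglongrightarrow> 0" by (rule LIMSEQ_power_zero) simp
    hence "(\<lambda>N. t - (1/2::real) ^ N) \<longlonglongrightarrow> t - 0" by (intro tendsto_diff tendsto_const)
    thus ?thesis by simp
  qed
  have "(\<lambda>N. real_of_int \<lfloor>2 ^ N * t\<rfloor> / 2 ^ N) \<longlonglongrightarrow> t"
    by (rule real_tendsto_sandwich[OF _ _ L tendsto_const]) (simp_all add: lo hi)
  hence "?g sums t" unfolding sums_def ps .
  hence "(?g has_sum t) UNIV" by (rule sums_nonneg_imp_has_sum) simp
  hence "infsum ?g UNIV = t" by (rule infsumI)
  moreover have "infsum ?g UNIV = infsum (\<lambda>n. (1/2::real) ^ Suc n) A"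
    by (rule infsum_cong_neutral) auto
  ultimately have "infsum (\<lambda>n. (1/2::real) ^ Suc n) A = t" by simp
  thus ?thesis by blast
qed

lemma geom_sums: "(\<lambda>n. d * (1/2::real) ^ Suc n) sums d"
proof -
  have "(\<lambda>n. (1/2::real) ^ n) sums (1 / (1 - 1/2))" by (rule geometric_sums) simp
  hence "(\<lambda>n. (1/2::real) ^ n) sums 2" by simp
  hence "(\<lambda>n. (d/2) * (1/2::real) ^ n) sums ((d/2) * 2)" by (rule sums_mult)
  thus ?thesis by simp
qed

lemma geom_good: "0 \<le> d \<Longrightarrow> good (\<lambda>n. d * (1/2::real) ^ Suc n)"
  unfolding good_def using geom_sums[of d] sums_summable by auto

lemma geom_sum1: "infsum (\<lambda>n. (1/2::real) ^ Suc n) UNIV = 1"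
  using good_has_sum_UNIV[OF geom_good[of 1]] geom_sums[of 1] sums_unique2 by simp

lemma geom_sum: "infsum (\<lambda>n. d * (1/2::real) ^ Suc n) UNIV = d"
  using geom_sum1 by (simp add: infsum_cmult_right' del: power_Suc)

lemma geom_AS:
  assumes "0 \<le> d"
  shows "AS (\<lambda>n. d * (1/2::real) ^ Suc n) = {0..d}"
proof
  show "AS (\<lambda>n. d * (1/2::real) ^ Suc n) \<subseteq> {0..d}"
    using AS_bounded[OF geom_good[OF assms]] geom_sum by simp
next
  show "{0..d} \<subseteq> AS (\<lambda>n. d * (1/2::real) ^ Suc n)"
  proof
    fix x assume x: "x \<in> {0..d}"
    show "x \<in> AS (\<lambda>n. d * (1/2::real) ^ Suc n)"
    proof (cases "x = d")
      case True
      hence "infsum (\<lambda>n. d * (1/2::real) ^ Suc n) UNIV = x" using geom_sum[of d] by simp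
      thus ?thesis unfolding AS_def by blast
    next
      case False
      hence dpos: "0 < d" "0 \<le> x / d" "x / d < 1" using x by auto
      obtain A where A: "infsum (\<lambda>n. (1/2::real) ^ Suc n) A = x / d"
        using binary_expansion[OF dpos(2,3)] by blast
      have "infsum (\<lambda>n. d * (1/2::real) ^ Suc n) A = d * (x / d)"
        using A by (simp add: infsum_cmult_right' del: power_Suc)
      also have "\<dots> = x" using dpos by simp
      finally show ?thesis unfolding AS_def by force
    qed
  qed
qed

lemma interleave:
  assumes ga: "good a" and gc: "good c"
  defines "b \<equiv> (\<lambda>n. if even n then a (n div 2) else c (n div 2))"
  shows "good b \<and> AS b = {x + y | x y. x \<in> AS a \<and> y \<in> AS c}"
proof -
  define e where "e = (\<lambda>m::nat. 2 * m)"
  define od where "od = (\<lambda>m::nat. 2 * m + 1)"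
  have ie: "inj_on e X" for X unfolding e_def by (simp add: inj_on_def)
  have iod: "inj_on od X" for X unfolding od_def by (simp add: inj_on_def)
  have be: "b \<circ> e = a" unfolding b_def e_def by (auto simp: fun_eq_iff)
  have bod: "b \<circ> od = c" unfolding b_def od_def by (auto simp: fun_eq_iff)
  have se: "b summable_on e ` X" for X
    using summable_on_reindex[OF ie, of b X] be good_summable_on[OF ga] by simp
  have so: "b summable_on od ` X" for X
    using summable_on_reindex[OF iod, of b X] bod good_summable_on[OF gc] by simp
  have infe: "infsum b (e ` X) = infsum a X" for X
    using infsum_reindex[OF ie, of b X] be by simp
  have info: "infsum b (od ` X) = infsum c X" for X
    using infsum_reindex[OF iod, of b X] bod by simp
  have neq: "2*m \<noteq> 2*k + (1::nat)" for m k by presburger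
  have disj: "e ` X \<inter> od ` Y = {}" for X Y
    unfolding e_def od_def using neq by blast
  have split: "B = e ` (e -` B) \<union> od ` (od -` B)" for B
  proof -
    have "n \<in> range e \<or> n \<in> range od" for n
    proof (cases "even n")
      case True hence "n = e (n div 2)" unfolding e_def by simp
      thus ?thesis by blast
    next
      case False hence "n = od (n div 2)" unfolding od_def by simp
      thus ?thesis by blast
    qed
    thus ?thesis by auto
  qed
  have infB: "infsum b B = infsum a (e -` B) + infsum c (od -` B)" for B
  proof -
    have "infsum b B = infsum b (e ` (e -` B) \<union> od ` (od -` B))" using split[of B] by simp
    also have "\<dots> = infsum b (e ` (e -` B)) + infsum b (od ` (od -` B))"
      by (rule infsum_Un_disjoint[OF se so disj])
    finally show ?thesis by (simp only: infe info)
  qed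
  have bnn: "0 \<le> b n" for n unfolding b_def using good_nonneg[OF ga] good_nonneg[OF gc] by simp
  have "b summable_on UNIV"
    using summable_on_Un_disjoint[OF se so disj, of UNIV UNIV] split[of UNIV] by simp
  hence gb: "good b" unfolding good_def using bnn summable_on_UNIV_nonneg_real_iff by blast
  have "AS b = {x + y | x y. x \<in> AS a \<and> y \<in> AS c}"
  proof
    show "AS b \<subseteq> {x + y | x y. x \<in> AS a \<and> y \<in> AS c}"
      unfolding AS_def using infB by blast
  next
    show "{x + y | x y. x \<in> AS a \<and> y \<in> AS c} \<subseteq> AS b"
    proof
      fix z assume "z \<in> {x + y | x y. x \<in> AS a \<and> y \<in> AS c}"
      then obtain X Y where z: "z = infsum a X + infsum c Y" unfolding AS_def by auto
      have "infsum b (e ` X \<union> od ` Y) = infsum b (e ` X) + infsum b (od ` Y)"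
        by (rule infsum_Un_disjoint[OF se so disj])
      hence "z = infsum b (e ` X \<union> od ` Y)" using z infe info by simp
      thus "z \<in> AS b" unfolding AS_def by blast
    qed
  qed
  thus ?thesis using gb by blast
qed

lemma ev_obtain: "eventually P sequentially \<Longrightarrow> \<exists>k. P k"
  unfolding eventually_sequentially by auto

lemma inv_suc_tendsto: "(\<lambda>k. 1 / real (Suc k)) \<longlonglongrightarrow> 0"
  using LIMSEQ_inverse_real_of_nat by (simp add: inverse_eq_divide)

lemma infdist_close:
  fixes x :: real
  assumes "E \<noteq> {}" "infdist x E < e"
  shows "\<exists>y\<in>E. dist x y < e"
proof -
  have "(INF y\<in>E. dist x y) < e" using assms infdist_notempty by metis
  moreover have "bdd_below ((\<lambda>y. dist x y) ` E)" by (rule bdd_belowI[of _ 0]) auto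
  ultimately show ?thesis using cINF_less_iff[OF assms(1)] by blast
qed

lemma haus_one:
  fixes K E :: "real set"
  assumes "K \<noteq> {}" "E \<noteq> {}" "K \<subseteq> {0..1}" "E \<subseteq> {0..1}"
    and "(SUP x\<in>K. infdist x E) < e"
  shows "\<forall>x\<in>K. \<exists>y\<in>E. dist x y < e"
proof
  fix x assume x: "x \<in> K"
  obtain y0 where y0: "y0 \<in> E" using assms(2) by auto
  have "\<forall>x'\<in>K. infdist x' E \<le> 1"
  proof
    fix x' assume "x' \<in> K"
    hence "infdist x' E \<le> dist x' y0" using infdist_le[OF y0] by blast
    also have "\<dots> \<le> 1"
    proof -
      have "x' \<in> {0..1}" "y0 \<in> {0..1}" using \<open>x' \<in> K\<close> y0 assms(3,4) by auto
      thus ?thesis unfolding dist_real_def by auto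
    qed
    finally show "infdist x' E \<le> 1" .
  qed
  hence "bdd_above ((\<lambda>x. infdist x E) ` K)" by (intro bdd_aboveI[of _ 1]) auto
  hence "infdist x E \<le> (SUP x\<in>K. infdist x E)" using cSUP_upper[OF x] by blast
  hence "infdist x E < e" using assms(5) by simp
  thus "\<exists>y\<in>E. dist x y < e" using infdist_close[OF assms(2)] by blast
qed

lemma haus_close:
  fixes K E :: "real set"
  assumes "K \<noteq> {}" "E \<noteq> {}" "K \<subseteq> {0..1}" "E \<subseteq> {0..1}"
    and "hausdorff_dist K E < e"
  shows "(\<forall>x\<in>K. \<exists>y\<in>E. dist x y < e) \<and> (\<forall>y\<in>E. \<exists>x\<in>K. dist y x < e)"
proof -
  have "(SUP x\<in>K. infdist x E) < e" "(SUP y\<in>E. infdist y K) < e"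
    using assms(5) unfolding hausdorff_dist_def by auto
  thus ?thesis using haus_one[OF assms(1-4)] haus_one[OF assms(2,1,4,3)] by blast
qed

lemma greedy:
  assumes gc: "good c" and bd: "\<And>m. n \<le> m \<Longrightarrow> c m \<le> h"
    and v: "0 \<le> v" "v = 0 \<or> v < infsum c {n..}"
  shows "\<exists>N\<ge>n. v \<le> sum c {n..<N} \<and> sum c {n..<N} \<le> v + h"
proof -
  define P where "P = (\<lambda>N. n \<le> N \<and> v \<le> sum c {n..<N})"
  have ex: "\<exists>N. P N"
  proof (cases "v = 0")
    case True thus ?thesis unfolding P_def by (intro exI[of _ n]) simp
  next
    case False
    hence "v < infsum c {n..}" using v by simp
    hence "eventually (\<lambda>N. v < sum c {n..<N}) sequentially"
      using partial_tendsto_tail[OF gc, of n] by (rule order_tendstoD(1)[rotated])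
    hence "eventually (\<lambda>N. n \<le> N \<and> v < sum c {n..<N}) sequentially"
      using eventually_ge_at_top[of n] by (simp add: eventually_conj_iff)
    then obtain N where "n \<le> N \<and> v < sum c {n..<N}" using ev_obtain by blast
    thus ?thesis unfolding P_def by (intro exI[of _ N]) simp
  qed
  define N where "N = (LEAST N. P N)"
  have PN: "P N" unfolding N_def using ex by (rule LeastI_ex)
  have h0: "0 \<le> h" using bd[of n] good_nonneg[OF gc, of n] by simp
  show ?thesis
  proof (cases "N = n")
    case True
    thus ?thesis using PN v h0 unfolding P_def by auto
  next
    case False
    hence "n < N" using PN unfolding P_def by simp
    then obtain M where M: "N = Suc M" "n \<le> M" by (cases N) auto
    have "M < N" using M by simp
    hence "\<not> P M" unfolding N_def by (rule not_less_Least)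
    hence lt: "sum c {n..<M} < v" using M unfolding P_def by simp
    have "sum c {n..<N} = sum c {n..<M} + c M" using M by (simp add: sum.atLeastLessThan_Suc)
    hence "sum c {n..<N} \<le> v + h" using lt bd[of M] M by simp
    thus ?thesis using PN unfolding P_def by blast
  qed
qed

lemma sum_diff_bound:
  fixes f g :: "nat \<Rightarrow> real"
  assumes "B \<subseteq> {..<n}"
  shows "\<bar>sum f B - sum g B\<bar> \<le> (\<Sum>m<n. \<bar>f m - g m\<bar>)"
proof -
  have "\<bar>sum f B - sum g B\<bar> = \<bar>\<Sum>m\<in>B. f m - g m\<bar>" by (simp only: sum_subtractf)
  also have "\<dots> \<le> (\<Sum>m\<in>B. \<bar>f m - g m\<bar>)" by (rule sum_abs)
  also have "\<dots> \<le> (\<Sum>m<n. \<bar>f m - g m\<bar>)" by (rule sum_mono2[OF finite_lessThan assms]) simp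
  finally show ?thesis .
qed

lemma D_tendsto:
  fixes \<beta> :: "nat \<Rightarrow> nat \<Rightarrow> real" and a :: "nat \<Rightarrow> real"
  assumes conv: "\<And>m. (\<lambda>k. \<beta> k m) \<longlonglongrightarrow> a m"
  shows "(\<lambda>k. \<Sum>m<n. \<bar>\<beta> k m - a m\<bar>) \<longlonglongrightarrow> 0"
proof -
  have "(\<lambda>k. \<Sum>m<n. \<bar>\<beta> k m - a m\<bar>) \<longlonglongrightarrow> (\<Sum>m<n. \<bar>a m - a m\<bar>)"
  proof (rule tendsto_sum)
    fix i show "(\<lambda>k. \<bar>\<beta> k i - a i\<bar>) \<longlonglongrightarrow> \<bar>a i - a i\<bar>"
      by (intro tendsto_rabs tendsto_diff conv tendsto_const)
  qed
  thus ?thesis by simp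
qed

lemma claim1:
  assumes g\<beta>: "\<And>k. good (\<beta> k)" and ga: "good a"
    and conv: "\<And>m. (\<lambda>k. \<beta> k m) \<longlonglongrightarrow> a m"
    and tconv: "\<And>n. (\<lambda>k. infsum (\<beta> k) {n..}) \<longlonglongrightarrow> d + infsum a {n..}"
    and close: "\<And>k. \<forall>x\<in>K. \<exists>y\<in>AS (\<beta> k). dist x y < 1 / real (Suc k)"
    and d: "0 \<le> d"
    and x: "x \<in> K"
  shows "x \<in> {u + v | u v. u \<in> AS a \<and> v \<in> {0..d}}"
proof -
  let ?T = "{u + v | u v. u \<in> AS a \<and> v \<in> {0..d}}"
  have "closed ?T" using compact_sums[OF AS_compact[OF ga] compact_Icc] compact_imp_closed by blast
  moreover have "\<forall>e>0. \<exists>z\<in>?T. dist z x < e"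
  proof (intro allI impI)
    fix e :: real assume e: "e > 0"
    have "eventually (\<lambda>n. infsum a {n..} < e/4) sequentially"
      using tail_tendsto[OF ga] e by (intro order_tendstoD(2)) auto
    then obtain n where tn: "infsum a {n..} < e/4" using ev_obtain by blast
    have e1: "eventually (\<lambda>k. 1 / real (Suc k) < e/4) sequentially"
      using inv_suc_tendsto e by (intro order_tendstoD(2)) auto
    have e2: "eventually (\<lambda>k. (\<Sum>m<n. \<bar>\<beta> k m - a m\<bar>) < e/4) sequentially"
      using D_tendsto[where \<beta>=\<beta> and a=a, OF conv, of n] e by (intro order_tendstoD(2)) auto
    have e3: "eventually (\<lambda>k. dist (infsum (\<beta> k) {n..}) (d + infsum a {n..}) < e/4) sequentially"
    proof -
      have "e/4 > 0" using e by simp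
      thus ?thesis using tconv[of n] unfolding tendsto_iff by blast
    qed
    obtain k where k1: "1 / real (Suc k) < e/4"
      and k2: "(\<Sum>m<n. \<bar>\<beta> k m - a m\<bar>) < e/4"
      and k3: "dist (infsum (\<beta> k) {n..}) (d + infsum a {n..}) < e/4"
      using ev_obtain[OF eventually_conj[OF e1 eventually_conj[OF e2 e3]]] by blast
    obtain y where y: "y \<in> AS (\<beta> k)" "dist x y < 1 / real (Suc k)" using close[of k] x by blast
    obtain A where yA: "y = infsum (\<beta> k) A" using y(1) unfolding AS_def by blast
    define B where "B = A \<inter> {..<n}"
    define w where "w = infsum (\<beta> k) (A \<inter> {n..})"
    have ys: "y = sum (\<beta> k) B + w" unfolding yA B_def w_def by (rule AS_split[OF g\<beta>])
    have wb: "0 \<le> w" "w \<le> infsum (\<beta> k) {n..}" unfolding w_def using tail_bound[OF g\<beta>] by auto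
    define z where "z = sum a B + min w d"
    have "sum a B \<in> AS a" unfolding B_def by (rule finite_in_AS) simp
    moreover have "min w d \<in> {0..d}" using wb d by auto
    ultimately have zT: "z \<in> ?T" unfolding z_def by blast
    have s1: "\<bar>sum (\<beta> k) B - sum a B\<bar> \<le> (\<Sum>m<n. \<bar>\<beta> k m - a m\<bar>)"
      unfolding B_def by (rule sum_diff_bound) auto
    have k3': "\<bar>infsum (\<beta> k) {n..} - (d + infsum a {n..})\<bar> < e/4"
      using k3 by (simp only: dist_real_def)
    have k3'': "infsum (\<beta> k) {n..} < d + infsum a {n..} + e/4"
      using abs_less_iff[THEN iffD1, OF k3'] by linarith
    have s2: "w - min w d \<le> e/4 + e/4"
    proof (cases "w \<le> d")
      case True thus ?thesis using e by simp
    next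
      case False
      hence "min w d = d" by simp
      thus ?thesis using wb(2) k3'' tn by linarith
    qed
    have yz: "y - z = (sum (\<beta> k) B - sum a B) + (w - min w d)" unfolding ys z_def by simp
    have "\<bar>y - z\<bar> \<le> \<bar>sum (\<beta> k) B - sum a B\<bar> + \<bar>w - min w d\<bar>"
      unfolding yz by (rule abs_triangle_ineq)
    moreover have "\<bar>w - min w d\<bar> = w - min w d" by simp
    ultimately have "\<bar>y - z\<bar> \<le> \<bar>sum (\<beta> k) B - sum a B\<bar> + (w - min w d)" by simp
    hence "\<bar>y - z\<bar> < 3 * e / 4" using s1 s2 k2 by linarith
    moreover have "\<bar>x - y\<bar> < e / 4" using y(2) k1 unfolding dist_real_def by linarith
    moreover have "\<bar>z - x\<bar> \<le> \<bar>x - y\<bar> + \<bar>y - z\<bar>" by linarith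
    ultimately have "dist z x < e" unfolding dist_real_def by linarith
    thus "\<exists>z\<in>?T. dist z x < e" using zT by blast
  qed
  ultimately show ?thesis using closed_approachable by blast
qed

lemma claim2:
  assumes g\<beta>: "\<And>k. good (\<beta> k)" and ga: "good a"
    and conv: "\<And>m. (\<lambda>k. \<beta> k m) \<longlonglongrightarrow> a m"
    and tconv: "\<And>n. (\<lambda>k. infsum (\<beta> k) {n..}) \<longlonglongrightarrow> d + infsum a {n..}"
    and close: "\<And>k. \<forall>y\<in>AS (\<beta> k). \<exists>x\<in>K. dist y x < 1 / real (Suc k)"
    and bnd: "\<And>k m. \<beta> k m \<le> 1 / real (Suc m)"
    and d: "0 \<le> d" and cK: "closed K"
    and z: "z \<in> {u + v | u v. u \<in> AS a \<and> v \<in> {0..d}}"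
  shows "z \<in> K"
proof -
  obtain u v where uv: "z = u + v" "u \<in> AS a" "v \<in> {0..d}" using z by blast
  obtain A where uA: "u = infsum a A" using uv(2) unfolding AS_def by blast
  have "\<forall>e>0. \<exists>x\<in>K. dist x z < e"
  proof (intro allI impI)
    fix e :: real assume e: "e > 0"
    define h where "h = e / 6"
    have h: "h > 0" unfolding h_def using e by simp
    have en1: "eventually (\<lambda>n. infsum a {n..} < h) sequentially"
      using tail_tendsto[OF ga] h by (intro order_tendstoD(2)) auto
    have en2: "eventually (\<lambda>n. 1 / real (Suc n) < h) sequentially"
      using inv_suc_tendsto h by (intro order_tendstoD(2)) auto
    obtain n where tn: "infsum a {n..} < h" and n2: "1 / real (Suc n) < h"
      using ev_obtain[OF eventually_conj[OF en1 en2]] by blast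
    have e1: "eventually (\<lambda>k. 1 / real (Suc k) < h) sequentially"
      using inv_suc_tendsto h by (intro order_tendstoD(2)) auto
    have e2: "eventually (\<lambda>k. (\<Sum>m<n. \<bar>\<beta> k m - a m\<bar>) < h) sequentially"
      using D_tendsto[where \<beta>=\<beta> and a=a, OF conv, of n] h by (intro order_tendstoD(2)) auto
    have e3: "eventually (\<lambda>k. dist (infsum (\<beta> k) {n..}) (d + infsum a {n..}) < h) sequentially"
      using tconv[of n] h unfolding tendsto_iff by blast
    obtain k where k1: "1 / real (Suc k) < h"
      and k2: "(\<Sum>m<n. \<bar>\<beta> k m - a m\<bar>) < h"
      and k3: "dist (infsum (\<beta> k) {n..}) (d + infsum a {n..}) < h"
      using ev_obtain[OF eventually_conj[OF e1 eventually_conj[OF e2 e3]]] by blast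
    have k3': "\<bar>infsum (\<beta> k) {n..} - (d + infsum a {n..})\<bar> < h"
      using k3 by (simp only: dist_real_def)
    have k3'': "d + infsum a {n..} - h < infsum (\<beta> k) {n..}"
      using abs_less_iff[THEN iffD1, OF k3'] by linarith
    define v' where "v' = max 0 (v - h)"
    have v'0: "0 \<le> v'" unfolding v'_def by simp
    have tnn: "0 \<le> infsum a {n..}" by (rule infsum_nonneg_good[OF ga])
    have v'c: "v' = 0 \<or> v' < infsum (\<beta> k) {n..}"
    proof (cases "v - h \<le> 0")
      case True thus ?thesis unfolding v'_def by simp
    next
      case False
      hence "v' = v - h" unfolding v'_def by simp
      thus ?thesis using uv(3) k3'' tnn by auto
    qed
    have bd: "\<beta> k m \<le> 1 / real (Suc n)" if "n \<le> m" for m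
    proof -
      have "1 / real (Suc m) \<le> 1 / real (Suc n)"
        using that by (intro divide_left_mono) auto
      thus ?thesis using bnd[of k m] by linarith
    qed
    obtain N where N: "n \<le> N" "v' \<le> sum (\<beta> k) {n..<N}" "sum (\<beta> k) {n..<N} \<le> v' + 1 / real (Suc n)"
      using greedy[OF g\<beta> bd v'0 v'c] by blast
    define B where "B = A \<inter> {..<n}"
    define S where "S = sum (\<beta> k) {n..<N}"
    define y where "y = sum (\<beta> k) B + S"
    have "y = sum (\<beta> k) (B \<union> {n..<N})"
      unfolding y_def S_def B_def by (rule sum.union_disjoint[symmetric]) auto
    hence yAS: "y \<in> AS (\<beta> k)" using finite_in_AS[of "B \<union> {n..<N}" "\<beta> k"] unfolding B_def by simp
    obtain x where x: "x \<in> K" "dist y x < 1 / real (Suc k)" using close[of k] yAS by blast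
    define w where "w = infsum a (A \<inter> {n..})"
    have us: "u = sum a B + w" unfolding uA B_def w_def by (rule AS_split[OF ga])
    have wb: "0 \<le> w" "w \<le> infsum a {n..}" unfolding w_def using tail_bound[OF ga] by auto
    have s1: "\<bar>sum (\<beta> k) B - sum a B\<bar> \<le> (\<Sum>m<n. \<bar>\<beta> k m - a m\<bar>)"
      unfolding B_def by (rule sum_diff_bound) auto
    have vv: "\<bar>v' - v\<bar> \<le> h" unfolding v'_def using uv(3) h by auto
    have Sv: "\<bar>S - v'\<bar> \<le> 1 / real (Suc n)" using N unfolding S_def by auto
    have yz: "y - z = (sum (\<beta> k) B - sum a B) + (S - v') + (v' - v) - w"
      unfolding y_def uv(1) us by simp
    have "\<bar>y - z\<bar> \<le> \<bar>sum (\<beta> k) B - sum a B\<bar> + \<bar>S - v'\<bar> + \<bar>v' - v\<bar> + \<bar>w\<bar>"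
      unfolding yz by linarith
    hence "\<bar>y - z\<bar> < 5 * h" using s1 k2 Sv n2 vv wb tn by linarith
    moreover have "\<bar>y - x\<bar> < h" using x(2) k1 unfolding dist_real_def by linarith
    moreover have "\<bar>x - z\<bar> \<le> \<bar>y - x\<bar> + \<bar>y - z\<bar>" by linarith
    ultimately have "dist x z < e" unfolding dist_real_def h_def by linarith
    thus "\<exists>x\<in>K. dist x z < e" using x(1) by blast
  qed
  thus ?thesis using closed_approachable[OF cK] by (metis dist_commute)
qed

lemma family_repr:
  assumes "E \<in> achievement_family"
  shows "\<exists>b. good b \<and> E = AS b \<and> E \<subseteq> {0..1} \<and> (\<forall>n. b n \<le> 1 / real (Suc n))"
proof -
  obtain a where a: "E = achievement_set a" "summable (\<lambda>n. \<bar>a n\<bar>)" "E \<subseteq> {0..1}"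
    using assms unfolding achievement_family_def by blast
  have EA: "E = AS a" using a achievement_set_AS by blast
  have ann: "0 \<le> a n" for n
  proof -
    have "infsum a {n} \<in> AS a" unfolding AS_def by blast
    hence "a n \<in> E" using EA by simp
    thus ?thesis using a(3) by auto
  qed
  have ga: "good a" unfolding good_def using ann summable_rabs_cancel[OF a(2)] by blast
  obtain b where b: "good b" "AS b = AS a" "\<And>n. b (Suc n) \<le> b n"
    using sort_lemma[OF ga] by blast
  have dec: "decseq b" using b(3) by (rule decseq_SucI)
  have "infsum b UNIV \<in> AS b" unfolding AS_def by blast
  hence tot: "infsum b UNIV \<le> 1" using b(2) EA a(3) by auto
  have bound: "b n \<le> 1 / real (Suc n)" for n
  proof -
    have "real (card {..n}) * b n \<le> sum b {..n}"
      by (rule sum_bounded_below) (use dec in \<open>auto simp: decseq_def\<close>)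
    moreover have "sum b {..n} \<le> infsum b UNIV"
      by (rule finite_sum_le_infsum) (auto simp: good_summable_on[OF b(1)] good_nonneg[OF b(1)])
    ultimately have "real (Suc n) * b n \<le> 1" using tot by simp
    thus ?thesis by (simp add: field_simps)
  qed
  show ?thesis using b(1) b(2) EA a(3) bound by auto
qed

lemma family_compact:
  assumes "E \<in> achievement_family"
  shows "compact E \<and> 0 \<in> E \<and> E \<subseteq> {0..1}"
  using family_repr[OF assms] AS_compact zero_in_AS by blast

lemma main_closed:
  assumes K: "K \<noteq> {}" "compact K" "K \<subseteq> {0..1}"
    and approx: "\<forall>e>0. \<exists>E\<in>achievement_family. hausdorff_dist K E < e"
  shows "K \<in> achievement_family"
proof -
  let ?P = "\<lambda>k \<alpha>. good \<alpha> \<and> AS \<alpha> \<subseteq> {0..1} \<and> (\<forall>n. \<alpha> n \<le> 1 / real (Suc n)) \<and>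
      (\<forall>x\<in>K. \<exists>y\<in>AS \<alpha>. dist x y < 1 / real (Suc k)) \<and>
      (\<forall>y\<in>AS \<alpha>. \<exists>x\<in>K. dist y x < 1 / real (Suc k))"
  have "\<forall>k. \<exists>\<alpha>. ?P k \<alpha>"
  proof
    fix k
    have "1 / real (Suc k) > 0" by simp
    then obtain E where E: "E \<in> achievement_family" "hausdorff_dist K E < 1 / real (Suc k)"
      using approx by blast
    obtain b where b: "good b" "E = AS b" "E \<subseteq> {0..1}" "\<forall>n. b n \<le> 1 / real (Suc n)"
      using family_repr[OF E(1)] by blast
    have "E \<noteq> {}" using zero_in_AS b(2) by auto
    from haus_close[OF K(1) this K(3) b(3) E(2)] show "\<exists>\<alpha>. ?P k \<alpha>" using b by blast
  qed
  from choice[OF this] obtain \<alpha> where \<alpha>: "\<And>k. ?P k (\<alpha> k)" by blast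
  have g\<alpha>: "good (\<alpha> k)" for k using \<alpha> by blast
  define s where "s = (\<lambda>k. infsum (\<alpha> k) UNIV)"
  have s01: "0 \<le> s k \<and> s k \<le> 1" for k
  proof -
    have "s k \<in> AS (\<alpha> k)" unfolding s_def AS_def by blast
    thus ?thesis using \<alpha>[of k] by auto
  qed
  have \<alpha>s: "\<alpha> k m \<le> s k" for k m
  proof -
    have "infsum (\<alpha> k) {m} \<le> infsum (\<alpha> k) UNIV" by (rule infsum_mono_good[OF g\<alpha>]) simp
    thus ?thesis unfolding s_def by simp
  qed
  define v where "v = (\<lambda>k m. if m = 0 then s k else \<alpha> k (m - 1))"
  have vb: "\<bar>v k m\<bar> \<le> 1" for k m
    using s01[of k] \<alpha>s[of k "m - 1"] good_nonneg[OF g\<alpha>, of k "m - 1"] unfolding v_def by auto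
  obtain r g where r: "strict_mono r" and g: "\<And>m. (\<lambda>k. v (r k) m) \<longlonglongrightarrow> g m"
    using diag_subseq[of v 1, OF vb] by blast
  define \<beta> where "\<beta> = (\<lambda>k. \<alpha> (r k))"
  define a where "a = (\<lambda>m. g (Suc m))"
  define s0 where "s0 = g 0"
  have conv: "(\<lambda>k. \<beta> k m) \<longlonglongrightarrow> a m" for m
    using g[of "Suc m"] unfolding v_def \<beta>_def a_def by simp
  have sconv: "(\<lambda>k. infsum (\<beta> k) UNIV) \<longlonglongrightarrow> s0"
    using g[of 0] unfolding v_def \<beta>_def s0_def s_def by simp
  have g\<beta>: "good (\<beta> k)" for k unfolding \<beta>_def by (rule g\<alpha>)
  have ann: "0 \<le> a m" for m
    by (rule LIMSEQ_le_const[OF conv]) (use good_nonneg[OF g\<beta>] in auto)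
  have pconv: "(\<lambda>k. sum (\<beta> k) {..<n}) \<longlonglongrightarrow> sum a {..<n}" for n
    by (rule tendsto_sum) (rule conv)
  have ple: "sum (\<beta> k) {..<n} \<le> infsum (\<beta> k) UNIV" for k n
    by (rule finite_sum_le_infsum) (auto simp: good_summable_on[OF g\<beta>] good_nonneg[OF g\<beta>])
  have pa: "sum a {..<n} \<le> s0" for n
    by (rule LIMSEQ_le[OF pconv sconv]) (use ple in auto)
  have "summable a" by (rule summableI_nonneg_bounded[of a s0]) (use ann pa in auto)
  hence ga: "good a" unfolding good_def using ann by simp
  have "(\<lambda>n. sum a {..<n}) \<longlonglongrightarrow> infsum a UNIV"
    using good_has_sum_UNIV[OF ga] by (simp add: sums_def)
  hence sig: "infsum a UNIV \<le> s0"
    by (rule LIMSEQ_le_const2) (use pa in auto)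
  define d where "d = s0 - infsum a UNIV"
  have d: "0 \<le> d" unfolding d_def using sig by simp
  have tconv: "(\<lambda>k. infsum (\<beta> k) {n..}) \<longlonglongrightarrow> d + infsum a {n..}" for n
  proof -
    have "(\<lambda>k. infsum (\<beta> k) UNIV - sum (\<beta> k) {..<n}) \<longlonglongrightarrow> s0 - sum a {..<n}"
      by (intro tendsto_diff sconv pconv)
    moreover have "s0 - sum a {..<n} = d + infsum a {n..}"
      unfolding d_def tail_eq[OF ga] by simp
    ultimately show ?thesis by (simp add: tail_eq[OF g\<beta>])
  qed
  have rk: "1 / real (Suc (r k)) \<le> 1 / real (Suc k)" for k
    using seq_suble[OF r, of k] by (intro divide_left_mono) auto
  have close1: "\<forall>x\<in>K. \<exists>y\<in>AS (\<beta> k). dist x y < 1 / real (Suc k)" for k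
    using \<alpha>[of "r k"] rk[of k] unfolding \<beta>_def by force
  have close2: "\<forall>y\<in>AS (\<beta> k). \<exists>x\<in>K. dist y x < 1 / real (Suc k)" for k
    using \<alpha>[of "r k"] rk[of k] unfolding \<beta>_def by force
  have bnd: "\<beta> k m \<le> 1 / real (Suc m)" for k m
    using \<alpha>[of "r k"] unfolding \<beta>_def by blast
  define c where "c = (\<lambda>n. d * (1/2::real) ^ Suc n)"
  have gc: "good c" unfolding c_def by (rule geom_good[OF d])
  have Ac: "AS c = {0..d}" unfolding c_def by (rule geom_AS[OF d])
  define b where "b = (\<lambda>n. if even n then a (n div 2) else c (n div 2))"
  have il: "good b \<and> AS b = {x + y | x y. x \<in> AS a \<and> y \<in> AS c}"
    unfolding b_def by (rule interleave[OF ga gc])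
  hence gb: "good b" and Ab: "AS b = {u + v | u v. u \<in> AS a \<and> v \<in> {0..d}}"
    using Ac by auto
  have "K \<subseteq> AS b"
  proof
    fix x assume "x \<in> K"
    thus "x \<in> AS b" unfolding Ab by (rule claim1[OF g\<beta> ga conv tconv close1 d])
  qed
  moreover have "AS b \<subseteq> K"
  proof
    fix z assume "z \<in> AS b"
    thus "z \<in> K" unfolding Ab
      by (rule claim2[OF g\<beta> ga conv tconv close2 bnd d compact_imp_closed[OF K(2)]])
  qed
  ultimately have KA: "K = AS b" by blast
  have sb: "summable (\<lambda>n. \<bar>b n\<bar>)" using gb unfolding good_def by simp
  have "K = achievement_set b" using KA achievement_set_AS[OF sb] by simp
  thus ?thesis unfolding achievement_family_def using sb K(3) by blast
qed

theorem theorem4p5: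
  shows "hclosed_in achievement_family K0_01 \<and> hclosed_in achievement_family K01"
proof
  show "hclosed_in achievement_family K0_01"
    unfolding hclosed_in_def
  proof
    show "achievement_family \<subseteq> K0_01" unfolding K0_01_def using family_compact by blast
  next
    show "\<forall>K\<in>K0_01. (\<forall>e>0. \<exists>E\<in>achievement_family. hausdorff_dist K E < e) \<longrightarrow> K \<in> achievement_family"
    proof (intro ballI impI)
      fix K assume "K \<in> K0_01" "\<forall>e>0. \<exists>E\<in>achievement_family. hausdorff_dist K E < e"
      thus "K \<in> achievement_family" unfolding K0_01_def using main_closed by blast
    qed
  qed
next
  show "hclosed_in achievement_family K01"
    unfolding hclosed_in_def
  proof
    show "achievement_family \<subseteq> K01" unfolding K01_def using family_compact by blast
  next
    show "\<forall>K\<in>K01. (\<forall>e>0. \<exists>E\<in>achievement_family. hausdorff_dist K E < e) \<longrightarrow> K \<in> achievement_family"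
    proof (intro ballI impI)
      fix K assume "K \<in> K01" "\<forall>e>0. \<exists>E\<in>achievement_family. hausdorff_dist K E < e"
      thus "K \<in> achievement_family" unfolding K01_def using main_closed by blast
    qed
  qed
qed

end
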